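(* Let $(Z_n)_{n\ge0}$ be a Galton--Watson process with $Z_0=1$ and offspring distribution $F$ on $\{0,1,2,\dots\}$ with mean $m:=\mathbb E\xi>1$, and let $W_n:=Z_n/m^n$. Assume $\sigma^2:=\mathrm{Var}\,\xi<\infty$. Then for every $A>0$, $$\Pr\{W_n>x\}\ge\Bigl(1-\frac{\sigma^2}{(m^2-m)A^2}+o(1)\Bigr)\sum_{i=0}^{n-1}m^i\overline F\bigl(m^{i+1}x+A\sqrt{m^{i+1}x}\bigr)$$ as $x\to\infty$ uniformly in $n$. In particular, if additionally $F$ is $\sqrt x$-insensitive, then $$\Pr\{W_n>x\}\ge(1+o(1))\sum_{i=0}^{n-1}m^i\overline F(m^{i+1}x)$$ as $x\to\infty$ uniformly in $n$.
   Context: The process is defined by $Z_{n+1}=\sum_{i=1}^{Z_n}\xi_i^{(n)}$, where $\xi_i^{(n)}$, $i\ge1$, $n\ge0$, are i.i.d. copies of a random variable $\xi$ with distribution $F$ on $\{0,1,2,\dots\}$; $\overline F(x):=\Pr\{\xi>x\}$ for real $x$. $F$ is $\sqrt x$-insensitive if $\overline F(x+\sqrt x)\sim\overline F(x)$ as $x\to\infty$. The $o(1)$ terms tend to $0$ as $x\to\infty$ uniformly over $n\ge1$. *)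

theory Defs
  imports "HOL-Probability.Probability" "HOL-Library.Landau_Symbols"
begin

fun iid_sum :: "nat pmf \<Rightarrow> nat \<Rightarrow> nat pmf" where
  "iid_sum p 0 = return_pmf 0"
| "iid_sum p (Suc k) = bind_pmf p (\<lambda>a. map_pmf (\<lambda>b. a + b) (iid_sum p k))"

text \<open>Distribution of Z_n for the Galton--Watson process with Z_0 = 1 and offspring law p:
  Z_{n+1} is the sum of Z_n i.i.d. copies of xi, independent of Z_n.\<close>
fun gw :: "nat pmf \<Rightarrow> nat \<Rightarrow> nat pmf" where
  "gw p 0 = return_pmf 1"
| "gw p (Suc n) = bind_pmf (gw p n) (iid_sum p)"

definition off_mean :: "nat pmf \<Rightarrow> real" where
  "off_mean p = measure_pmf.expectation p real"

definition off_var :: "nat pmf \<Rightarrow> real" where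
  "off_var p = measure_pmf.variance p real"

definition Fbar :: "nat pmf \<Rightarrow> real \<Rightarrow> real" where
  "Fbar p x = measure_pmf.prob p {k. real k > x}"

definition sqrt_insensitive :: "nat pmf \<Rightarrow> bool" where
  "sqrt_insensitive p \<longleftrightarrow> (\<lambda>x. Fbar p (x + sqrt x)) \<sim>[at_top] (\<lambda>x. Fbar p x)"

end

theory Submission
  imports Defs
begin

lemma iid_sum_add:
  "iid_sum p (a+b) = bind_pmf (iid_sum p a) (\<lambda>u. map_pmf (\<lambda>v. u+v) (iid_sum p b))"
proof (induction a)
  case 0
  have "(+) (0::nat) = id" by auto
  then show ?case by (simp add: bind_return_pmf pmf.map_id)
next
  case (Suc a)
  show ?case
    by (simp add: Suc bind_assoc_pmf map_bind_pmf bind_map_pmf map_pmf_comp add.assoc[symmetric])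
qed

lemma iid_sum_bind:
  "bind_pmf (iid_sum q k) (iid_sum p) = iid_sum (bind_pmf q (iid_sum p)) k"
proof (induction k)
  case 0
  then show ?case by (simp add: bind_return_pmf)
next
  case (Suc k)
  have "bind_pmf (iid_sum q (Suc k)) (iid_sum p)
      = bind_pmf q (\<lambda>a. bind_pmf (iid_sum q k) (\<lambda>b. bind_pmf (iid_sum p a) (\<lambda>u. map_pmf (\<lambda>v. u+v) (iid_sum p b))))"
    by (simp add: bind_assoc_pmf bind_map_pmf iid_sum_add)
  also have "\<dots> = bind_pmf q (\<lambda>a. bind_pmf (iid_sum p a) (\<lambda>u. map_pmf (\<lambda>v. u+v) (bind_pmf (iid_sum q k) (iid_sum p))))"
    by (subst bind_commute_pmf) (simp add: map_bind_pmf)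
  also have "\<dots> = iid_sum (bind_pmf q (iid_sum p)) (Suc k)"
    by (simp add: Suc bind_assoc_pmf)
  finally show ?case .
qed

lemma iid_sum_one0: "iid_sum (return_pmf 1) k = return_pmf k"
  by (induction k) (simp_all add: bind_return_pmf)

lemma iid_sum_one: "iid_sum (return_pmf (Suc 0)) = return_pmf"
  using iid_sum_one0 by fastforce

lemma gw_first: "gw p (Suc n) = bind_pmf p (iid_sum (gw p n))"
proof (induction n)
  case 0
  have "gw p (Suc 0) = map_pmf (\<lambda>a. a) p"
    by (simp add: bind_return_pmf map_pmf_def bind_return_pmf')
  also have "\<dots> = bind_pmf p (iid_sum (gw p 0))"
    by (simp add: iid_sum_one map_pmf_def bind_return_pmf')
  finally show ?case by simp
next
  case (Suc n)
  have "gw p (Suc (Suc n)) = bind_pmf (bind_pmf p (iid_sum (gw p n))) (iid_sum p)"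
    using Suc by simp
  also have "\<dots> = bind_pmf p (\<lambda>k. iid_sum (bind_pmf (gw p n) (iid_sum p)) k)"
    by (simp add: bind_assoc_pmf iid_sum_bind)
  finally show ?case by simp
qed

fun isum2 :: "(nat \<times> nat) pmf \<Rightarrow> nat \<Rightarrow> (nat \<times> nat) pmf" where
  "isum2 q 0 = return_pmf (0,0)"
| "isum2 q (Suc k) = bind_pmf q (\<lambda>a. map_pmf (\<lambda>b. (fst a + fst b, snd a + snd b)) (isum2 q k))"

lemma map_fst_isum2: "map_pmf fst (isum2 q k) = iid_sum (map_pmf fst q) k"
proof (induction k)
  case (Suc k)
  then show ?case by (simp add: map_bind_pmf bind_map_pmf map_pmf_comp flip: Suc)
qed simp

lemma map_snd_isum2: "map_pmf snd (isum2 q k) = iid_sum (map_pmf snd q) k"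
proof (induction k)
  case (Suc k)
  then show ?case by (simp add: map_bind_pmf bind_map_pmf map_pmf_comp flip: Suc)
qed simp

lemma isum2_support:
  assumes "\<And>z c. (z,c) \<in> set_pmf q \<Longrightarrow> c > 0 \<Longrightarrow> T < real z"
  shows "(z,c) \<in> set_pmf (isum2 q k) \<Longrightarrow> c > 0 \<Longrightarrow> T < real z"
proof (induction k arbitrary: z c)
  case 0
  then show ?case by simp
next
  case (Suc k)
  then obtain a b where ab: "a \<in> set_pmf q" "b \<in> set_pmf (isum2 q k)"
    "z = fst a + fst b" "c = snd a + snd b" by auto
  show ?case
  proof (cases "snd a > 0")
    case True
    then have "T < real (fst a)" using assms[of "fst a" "snd a"] ab(1) by simp
    then show ?thesis using ab by simp
  next
    case False
    then have "snd b > 0" using ab Suc.prems by simp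
    then have "T < real (fst b)" using Suc.IH[of "fst b" "snd b"] ab(2) by simp
    then show ?thesis using ab by simp
  qed
qed

lemma nn_M1:
  "(\<integral>\<^sup>+z. of_nat z \<partial>iid_sum q k) = of_nat k * (\<integral>\<^sup>+z. of_nat z \<partial>q)"
proof (induction k)
  case 0
  then show ?case by simp
next
  case (Suc k)
  have "(\<integral>\<^sup>+z. of_nat z \<partial>iid_sum q (Suc k))
     = (\<integral>\<^sup>+a. (\<integral>\<^sup>+b. of_nat a + of_nat b \<partial>iid_sum q k) \<partial>q)"
    by simp
  also have "\<dots> = (\<integral>\<^sup>+a. of_nat a + of_nat k * (\<integral>\<^sup>+z. of_nat z \<partial>q) \<partial>q)"
    by (simp add: nn_integral_add Suc measure_pmf.emeasure_space_1)
  also have "\<dots> = of_nat (Suc k) * (\<integral>\<^sup>+z. of_nat z \<partial>q)"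
    by (simp add: nn_integral_add measure_pmf.emeasure_space_1 algebra_simps)
  finally show ?case .
qed

lemma nat_sq_split: "(a+b)*(a+b-1) = a*(a-1) + b*(b-1) + 2*a*b" for a b :: nat
  by (cases a; cases b; simp add: algebra_simps)

lemma ennr_sq_split: "(of_nat ((a+b)*(a+b-1)) :: ennreal) = of_nat (a*(a-1)) + of_nat (b*(b-1)) + 2 * of_nat a * of_nat b"
proof -
  have "(of_nat ((a+b)*(a+b-1)) :: ennreal) = of_nat (a*(a-1) + b*(b-1) + 2*a*b)"
    by (simp only: nat_sq_split)
  also have "\<dots> = of_nat (a*(a-1)) + of_nat (b*(b-1)) + 2 * of_nat a * of_nat b"
    by (simp only: of_nat_add of_nat_mult) simp
  finally show ?thesis .
qed

lemma nn_M2: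
  "(\<integral>\<^sup>+z. of_nat (z*(z-1)) \<partial>iid_sum q k) = of_nat k * (\<integral>\<^sup>+z. of_nat (z*(z-1)) \<partial>q)
      + of_nat (k*(k-1)) * (\<integral>\<^sup>+z. of_nat z \<partial>q)^2"
proof (induction k)
  case 0
  then show ?case by simp
next
  case (Suc k)
  define \<mu> where "\<mu> = (\<integral>\<^sup>+z. of_nat z \<partial>q)"
  define w where "w = (\<integral>\<^sup>+z. of_nat (z*(z-1)) \<partial>q)"
  have "(\<integral>\<^sup>+z. of_nat (z*(z-1)) \<partial>iid_sum q (Suc k))
     = (\<integral>\<^sup>+a. (\<integral>\<^sup>+b. of_nat (a*(a-1)) + of_nat (b*(b-1)) + 2 * of_nat a * of_nat b \<partial>iid_sum q k) \<partial>q)"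
    by (simp only: iid_sum.simps nn_integral_bind_pmf nn_integral_map_pmf ennr_sq_split)
  also have "\<dots> = (\<integral>\<^sup>+a. of_nat (a*(a-1)) + (of_nat k * w + of_nat (k*(k-1)) * \<mu>^2)
        + 2 * of_nat a * (of_nat k * \<mu>) \<partial>q)"
  proof -
    have "(\<integral>\<^sup>+b. of_nat (a*(a-1)) + of_nat (b*(b-1)) + 2 * of_nat a * of_nat b \<partial>iid_sum q k)
       = of_nat (a*(a-1)) + (\<integral>\<^sup>+b. of_nat (b*(b-1)) \<partial>iid_sum q k)
         + 2 * of_nat a * (\<integral>\<^sup>+b. of_nat b \<partial>iid_sum q k)" for a :: nat
      by (simp add: nn_integral_add nn_integral_cmult measure_pmf.emeasure_space_1 mult.assoc
          del: of_nat_mult)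
    then show ?thesis by (simp only: Suc nn_M1 \<mu>_def w_def)
  qed
  also have "\<dots> = w + (of_nat k * w + of_nat (k*(k-1)) * \<mu>^2) + 2 * \<mu> * (of_nat k * \<mu>)"
    by (simp add: nn_integral_add nn_integral_cmult measure_pmf.emeasure_space_1
        \<mu>_def w_def mult.assoc mult.commute[of _ "of_nat k * _"])
  also have "\<dots> = of_nat (Suc k) * w + of_nat (Suc k * (Suc k - 1)) * \<mu>^2"
  proof -
    have "Suc k * (Suc k - 1) = k*(k-1) + 2*k" by (cases k) simp_all
    then have e: "(of_nat (Suc k * (Suc k - 1)) :: ennreal) = of_nat (k*(k-1)) + 2 * of_nat k"
      by (metis mult_2 of_nat_add of_nat_mult)
    show ?thesis by (simp only: e) (simp add: algebra_simps power2_eq_square)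
  qed
  finally show ?case by (simp add: \<mu>_def w_def)
qed

lemma pmf_moments:
  fixes p :: "nat pmf"
  assumes var_fin: "integrable (measure_pmf p) (\<lambda>k. (real k)\<^sup>2)"
  shows "(\<integral>\<^sup>+k. of_nat k \<partial>p) = ennreal (off_mean p)"
    and "(\<integral>\<^sup>+k. of_nat (k*(k-1)) \<partial>p) = ennreal (off_var p + (off_mean p)\<^sup>2 - off_mean p)"
    and "off_var p \<ge> 0"
proof -
  have i1: "integrable (measure_pmf p) (\<lambda>k. real k)"
    by (rule Bochner_Integration.integrable_bound[OF var_fin])
      (auto simp: power2_eq_square intro!: AE_I2, metis of_nat_le_iff of_nat_mult le_square)
  have e1: "(\<integral>\<^sup>+k. of_nat k \<partial>p) = ennreal (\<integral>k. real k \<partial>p)"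
    by (simp add: ennreal_of_nat_eq_real_of_nat nn_integral_eq_integral[OF i1])
  then show "(\<integral>\<^sup>+k. of_nat k \<partial>p) = ennreal (off_mean p)" by (simp add: off_mean_def)
  define m where "m = off_mean p"
  have rk: "real (k*(k-1)) = (real k)\<^sup>2 - real k" for k :: nat
    by (cases k) (simp_all add: power2_eq_square algebra_simps)
  have i2: "integrable (measure_pmf p) (\<lambda>k. real (k*(k-1)))"
    unfolding rk using var_fin i1 by simp
  have e2: "(\<integral>\<^sup>+k. of_nat (k*(k-1)) \<partial>p) = ennreal (\<integral>k. real (k*(k-1)) \<partial>p)"
    by (subst ennreal_of_nat_eq_real_of_nat, rule nn_integral_eq_integral[OF i2]) auto
  have "off_var p = (\<integral>k. (real k - m)\<^sup>2 \<partial>p)"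
    by (simp add: off_var_def m_def off_mean_def)
  also have "\<dots> = (\<integral>k. (real k)\<^sup>2 - 2 * m * real k + m\<^sup>2 \<partial>p)"
    by (simp add: power2_diff algebra_simps)
  also have "\<dots> = (\<integral>k. (real k)\<^sup>2 \<partial>p) - 2 * m * m + m\<^sup>2"
    using var_fin i1 by (simp add: m_def off_mean_def)
  finally have v: "off_var p = (\<integral>k. (real k)\<^sup>2 \<partial>p) - m\<^sup>2" by (simp add: power2_eq_square)
  have "(\<integral>k. real (k*(k-1)) \<partial>p) = (\<integral>k. (real k)\<^sup>2 \<partial>p) - m"
    unfolding rk using var_fin i1 by (simp add: m_def off_mean_def)
  then show "(\<integral>\<^sup>+k. of_nat (k*(k-1)) \<partial>p) = ennreal (off_var p + (off_mean p)\<^sup>2 - off_mean p)"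
    using e2 v by (simp add: m_def)
  show "off_var p \<ge> 0" unfolding off_var_def by simp
qed

lemma chebyshev_nat:
  fixes D :: "nat pmf" and a b t :: real
  assumes m1: "(\<integral>\<^sup>+z. of_nat z \<partial>D) = ennreal a"
    and m2: "(\<integral>\<^sup>+z. of_nat (z*(z-1)) \<partial>D) = ennreal b"
    and a0: "a \<ge> 0" and b0: "b \<ge> 0" and ta: "t < a"
  shows "measure_pmf.prob D {z. real z \<le> t} * (a - t)\<^sup>2 \<le> b + a - a\<^sup>2"
proof -
  let ?A = "{z. real z \<le> t}"
  let ?P = "measure_pmf.prob D ?A"
  have pw: "ennreal ((a - t)\<^sup>2) * indicator ?A z + ennreal (2*a) * of_nat z
      \<le> of_nat (z*(z-1)) + of_nat z + ennreal (a\<^sup>2)" for z :: nat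
  proof -
    have r: "real (z*(z-1)) + real z = (real z)\<^sup>2"
      by (cases z) (simp_all add: power2_eq_square algebra_simps)
    have "(a - t)\<^sup>2 * indicator ?A z + 2*a*real z \<le> real (z*(z-1)) + real z + a\<^sup>2"
    proof (cases "real z \<le> t")
      case True
      then have "(a - t)\<^sup>2 \<le> (a - real z)\<^sup>2" using ta by (intro power_mono) auto
      then show ?thesis using True unfolding r by (simp add: power2_diff)
    next
      case False
      have "0 \<le> (a - real z)\<^sup>2" by simp
      then show ?thesis using False unfolding r by (simp add: power2_diff)
    qed
    then have "ennreal ((a - t)\<^sup>2 * indicator ?A z + 2*a*real z)
        \<le> ennreal (real (z*(z-1)) + real z + a\<^sup>2)" by (rule ennreal_leI)
    then show ?thesis using a0
      by (simp add: ennreal_plus ennreal_mult ennreal_of_nat_eq_real_of_nat indicator_def of_bool_def split: if_splits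
          del: of_nat_mult)
  qed
  have "(\<integral>\<^sup>+z. ennreal ((a - t)\<^sup>2) * indicator ?A z + ennreal (2*a) * of_nat z \<partial>D)
      \<le> (\<integral>\<^sup>+z. of_nat (z*(z-1)) + of_nat z + ennreal (a\<^sup>2) \<partial>D)"
    by (rule nn_integral_mono) (rule pw)
  also have "\<dots> = ennreal b + ennreal a + ennreal (a\<^sup>2)"
    by (simp add: nn_integral_add m1 m2[simplified] measure_pmf.emeasure_space_1)
  finally have "ennreal ((a - t)\<^sup>2) * ennreal ?P + ennreal (2*a) * ennreal a
      \<le> ennreal b + ennreal a + ennreal (a\<^sup>2)"
    by (simp add: nn_integral_add nn_integral_cmult nn_integral_cmult_indicator m1
        measure_pmf.emeasure_eq_measure)
  then have "ennreal ((a - t)\<^sup>2 * ?P + 2*a*a) \<le> ennreal (b + a + a\<^sup>2)"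
    using a0 b0 by (simp add: ennreal_plus ennreal_mult)
  then have "(a - t)\<^sup>2 * ?P + 2*a*a \<le> b + a + a\<^sup>2"
    using a0 b0 by (subst (asm) ennreal_le_iff) auto
  then show ?thesis by (simp add: power2_eq_square algebra_simps)
qed

fun wgw :: "real \<Rightarrow> real \<Rightarrow> nat \<Rightarrow> real" where
  "wgw m K 0 = 0"
| "wgw m K (Suc n) = K * m^n + m\<^sup>2 * wgw m K n"

lemma wgw_nonneg: "m \<ge> 0 \<Longrightarrow> K \<ge> 0 \<Longrightarrow> wgw m K n \<ge> 0"
  by (induction n) auto

lemma wgw_closed: "m > 1 \<Longrightarrow> wgw m K n = K / (m\<^sup>2 - m) * (m^(2*n) - m^n)"
proof (induction n)
  case (Suc n)
  define c where "c = K / (m\<^sup>2 - m)"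
  have "m\<^sup>2 - m > 0" using Suc.prems by (simp add: power2_eq_square)
  then have Kc: "K = c * (m\<^sup>2 - m)" by (simp add: c_def)
  have "wgw m K (Suc n) = c * (m\<^sup>2 - m) * m^n + m\<^sup>2 * (c * (m^(2*n) - m^n))"
  proof -
    have "wgw m K n = c * (m^(2*n) - m^n)" using Suc by (simp add: c_def)
    then show ?thesis using Kc by simp
  qed
  also have "\<dots> = c * (m^(2*Suc n) - m^Suc n)"
    by (simp add: power2_eq_square algebra_simps)
  finally show ?case by (simp add: c_def)
qed simp

context
  fixes p :: "nat pmf" and m K :: real
  assumes pm1: "(\<integral>\<^sup>+k. of_nat k \<partial>p) = ennreal m"
    and pm2: "(\<integral>\<^sup>+k. of_nat (k*(k-1)) \<partial>p) = ennreal K"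
    and m0: "m \<ge> 0" and K0: "K \<ge> 0"
begin

lemma gw_m1: "(\<integral>\<^sup>+z. of_nat z \<partial>gw p n) = ennreal (m^n)"
proof (induction n)
  case (Suc n)
  have "(\<integral>\<^sup>+z. of_nat z \<partial>gw p (Suc n)) = (\<integral>\<^sup>+z. of_nat z * ennreal m \<partial>gw p n)"
    by (simp add: nn_M1 pm1 mult.commute)
  also have "\<dots> = ennreal (m^n) * ennreal m"
    by (simp add: nn_integral_multc Suc)
  finally show ?case using m0 by (simp add: ennreal_mult'' mult.commute)
qed simp

lemma gw_m2: "(\<integral>\<^sup>+z. of_nat (z*(z-1)) \<partial>gw p n) = ennreal (wgw m K n)"
proof (induction n)
  case (Suc n)
  have "(\<integral>\<^sup>+z. of_nat (z*(z-1)) \<partial>gw p (Suc n))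
      = (\<integral>\<^sup>+z. of_nat z * ennreal K + of_nat (z*(z-1)) * ennreal (m\<^sup>2) \<partial>gw p n)"
    by (simp only: gw.simps nn_integral_bind_pmf nn_M2 pm1 pm2)
       (simp add: ennreal_power m0)
  also have "\<dots> = ennreal (m^n) * ennreal K + ennreal (wgw m K n) * ennreal (m\<^sup>2)"
    using gw_m1[of n] Suc[simplified] by (simp add: nn_integral_add nn_integral_multc)
  also have "\<dots> = ennreal (wgw m K (Suc n))"
    using m0 K0 wgw_nonneg[OF m0 K0, of n]
    by (simp add: ennreal_mult'' mult.commute)
  finally show ?case .
qed simp

lemma cheb_gw:
  assumes m1: "m > 1" and ks: "s < real k"
  defines "V \<equiv> K / (m\<^sup>2 - m) - 1"
  assumes V0: "V \<ge> 0"
  shows "measure_pmf.prob (iid_sum (gw p n) k) {z. real z \<le> m^n * s} \<le> real k * V / (real k - s)\<^sup>2"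
proof -
  define \<mu> where "\<mu> = m^n"
  have \<mu>0: "\<mu> > 0" using m1 by (simp add: \<mu>_def)
  define a where "a = real k * \<mu>"
  define b where "b = real k * wgw m K n + real (k*(k-1)) * \<mu>\<^sup>2"
  have A: "(\<integral>\<^sup>+z. of_nat z \<partial>iid_sum (gw p n) k) = ennreal a"
    using \<mu>0 by (simp only: nn_M1 gw_m1) (simp add: a_def \<mu>_def ennreal_mult' ennreal_of_nat_eq_real_of_nat)
  have B: "(\<integral>\<^sup>+z. of_nat (z*(z-1)) \<partial>iid_sum (gw p n) k) = ennreal b"
    unfolding nn_M2 gw_m1 gw_m2 b_def \<mu>_def using \<mu>0 wgw_nonneg[OF m0 K0, of n]
    by (simp add: ennreal_mult' ennreal_of_nat_eq_real_of_nat ennreal_power m0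
        del: of_nat_mult)
  have t: "m^n * s < a" using ks \<mu>0 by (simp add: a_def \<mu>_def)
  have "measure_pmf.prob (iid_sum (gw p n) k) {z. real z \<le> m^n * s} * (a - m^n * s)\<^sup>2 \<le> b + a - a\<^sup>2"
    by (rule chebyshev_nat[OF A B _ _ t]) (use \<mu>0 wgw_nonneg[OF m0 K0, of n] in \<open>auto simp: a_def b_def\<close>)
  also have "b + a - a\<^sup>2 = real k * V * (\<mu>\<^sup>2 - \<mu>)"
  proof -
    have kk: "real (k*(k-1)) = real k * real k - real k" by (cases k) (auto simp: algebra_simps)
    have p2: "m^(2*n) = \<mu>\<^sup>2" unfolding \<mu>_def by (metis power_mult mult.commute)
    have W: "wgw m K n = (V + 1) * (\<mu>\<^sup>2 - \<mu>)"
      using wgw_closed[OF m1, of K n] p2 by (simp add: V_def \<mu>_def)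
    show ?thesis unfolding b_def a_def W kk by (simp add: power2_eq_square algebra_simps)
  qed
  also have "\<dots> \<le> real k * V * \<mu>\<^sup>2" using V0 \<mu>0 by (intro mult_left_mono) auto
  finally have I: "measure_pmf.prob (iid_sum (gw p n) k) {z. real z \<le> m^n * s} * (\<mu>\<^sup>2 * (real k - s)\<^sup>2)
      \<le> real k * V * \<mu>\<^sup>2"
    by (simp add: a_def \<mu>_def power2_eq_square algebra_simps)
  have pos: "\<mu>\<^sup>2 * (real k - s)\<^sup>2 > 0" using \<mu>0 ks by simp
  show ?thesis using I pos \<mu>0 ks by (simp add: pos_le_divide_eq field_simps)
qed

end

definition tt :: "real \<Rightarrow> real \<Rightarrow> real \<Rightarrow> real" where
  "tt m A x = m * x + A * sqrt (m * x)"

fun Gj :: "nat pmf \<Rightarrow> real \<Rightarrow> real \<Rightarrow> nat \<Rightarrow> real \<Rightarrow> (nat \<times> nat) pmf" where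
  "Gj p m A 0 x = return_pmf (1, 0)"
| "Gj p m A (Suc n) x = bind_pmf p (\<lambda>k. map_pmf
     (\<lambda>zc. (fst zc, snd zc + (if real k > tt m A x \<and> real (fst zc) > m^(Suc n) * x then 1 else 0)))
     (isum2 (Gj p m A n (m*x)) k))"

lemma Gj_fst: "map_pmf fst (Gj p m A n x) = gw p n"
proof (induction n arbitrary: x)
  case (Suc n)
  have "map_pmf fst (Gj p m A (Suc n) x) = bind_pmf p (\<lambda>k. map_pmf fst (isum2 (Gj p m A n (m*x)) k))"
    by (simp add: map_bind_pmf map_pmf_comp)
  also have "\<dots> = bind_pmf p (iid_sum (gw p n))"
    by (simp add: map_fst_isum2 Suc)
  finally show ?case by (simp only: gw_first)
qed simp

lemma Gj_support: "(z,c) \<in> set_pmf (Gj p m A n x) \<Longrightarrow> c > 0 \<Longrightarrow> m^n * x < real z"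
proof (induction n arbitrary: x z c)
  case 0
  then show ?case by simp
next
  case (Suc n)
  from Suc.prems(1) obtain k z' c' where k: "(z', c') \<in> set_pmf (isum2 (Gj p m A n (m*x)) k)"
    and zc: "z = z'" "c = c' + (if real k > tt m A x \<and> real z' > m^(Suc n) * x then 1 else 0)"
    by auto
  show ?case
  proof (cases "real k > tt m A x \<and> real z' > m^(Suc n) * x")
    case True
    then show ?thesis using zc by simp
  next
    case False
    then have "c' > 0" using zc Suc.prems by (auto split: if_splits)
    have "m^n * (m*x) < real z'"
      by (rule isum2_support[OF _ k \<open>c' > 0\<close>]) (rule Suc.IH)
    then show ?thesis using zc by (simp add: algebra_simps)
  qed
qed

lemma prob_gw_ge:
  "measure_pmf.prob (gw p n) {k. real k / m ^ n > x} \<ge> measure_pmf.prob (Gj p m A n x) {zc. snd zc > 0}"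
  if "m > 0"
proof -
  let ?G = "Gj p m A n x"
  have "measure_pmf.prob (gw p n) {k. real k / m ^ n > x} = measure_pmf.prob ?G {zc. real (fst zc) / m^n > x}"
    by (simp flip: Gj_fst[of p m A n x] add: vimage_def)
  also have "\<dots> \<ge> measure_pmf.prob ?G ({zc. snd zc > 0} \<inter> set_pmf ?G)"
  proof (rule measure_pmf.finite_measure_mono)
    show "{zc. snd zc > 0} \<inter> set_pmf ?G \<subseteq> {zc. real (fst zc) / m^n > x}"
      using Gj_support[of _ _ p m A n x] that by (auto simp: pos_less_divide_eq mult.commute)
  qed simp
  finally show ?thesis by (simp add: measure_Int_set_pmf)
qed

definition EN :: "nat pmf \<Rightarrow> real \<Rightarrow> real \<Rightarrow> nat \<Rightarrow> real \<Rightarrow> ennreal" where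
  "EN p m A n x = (\<integral>\<^sup>+zc. of_nat (snd zc) \<partial>Gj p m A n x)"

definition EM :: "nat pmf \<Rightarrow> real \<Rightarrow> real \<Rightarrow> nat \<Rightarrow> real \<Rightarrow> ennreal" where
  "EM p m A n x = (\<integral>\<^sup>+zc. of_nat (snd zc * (snd zc - 1)) \<partial>Gj p m A n x)"

lemma int_snd: "(\<integral>\<^sup>+zc. f (snd zc) \<partial>isum2 q k) = (\<integral>\<^sup>+c. f c \<partial>iid_sum (map_pmf snd q) k)"
  by (simp add: map_snd_isum2[symmetric])

lemma int_fst: "(\<integral>\<^sup>+zc. f (fst zc) \<partial>isum2 q k) = (\<integral>\<^sup>+c. f c \<partial>iid_sum (map_pmf fst q) k)"
  by (simp add: map_fst_isum2[symmetric])

lemma EN_Suc: "EN p m A (Suc n) x = (\<integral>\<^sup>+k. of_nat k * EN p m A n (m*x)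
    + (if real k > tt m A x then emeasure (iid_sum (gw p n) k) {z. real z > m^Suc n * x} else 0) \<partial>p)"
proof -
  have inner: "(\<integral>\<^sup>+zc. of_nat (snd zc + (if real k > tt m A x \<and> real (fst zc) > m^(Suc n) * x then 1 else 0))
        \<partial>isum2 (Gj p m A n (m*x)) k)
      = of_nat k * EN p m A n (m*x)
    + (if real k > tt m A x then emeasure (iid_sum (gw p n) k) {z. real z > m^Suc n * x} else 0)" for k
  proof -
    have "(\<integral>\<^sup>+zc. of_nat (snd zc + (if real k > tt m A x \<and> real (fst zc) > m^(Suc n) * x then 1 else 0))
        \<partial>isum2 (Gj p m A n (m*x)) k)
      = (\<integral>\<^sup>+zc. of_nat (snd zc) \<partial>isum2 (Gj p m A n (m*x)) k)
        + (\<integral>\<^sup>+zc. (if real k > tt m A x then indicator {z. real z > m^(Suc n) * x} (fst zc) else 0)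
        \<partial>isum2 (Gj p m A n (m*x)) k)"
      by (subst nn_integral_add[symmetric]) (auto intro!: nn_integral_cong simp: indicator_def)
    also have "(\<integral>\<^sup>+zc. of_nat (snd zc) \<partial>isum2 (Gj p m A n (m*x)) k) = of_nat k * EN p m A n (m*x)"
      by (simp only: int_snd[where f=of_nat] nn_M1) (simp add: EN_def)
    also have "(\<integral>\<^sup>+zc. (if real k > tt m A x then indicator {z. real z > m^(Suc n) * x} (fst zc) else 0)
        \<partial>isum2 (Gj p m A n (m*x)) k)
      = (if real k > tt m A x then emeasure (iid_sum (gw p n) k) {z. real z > m^Suc n * x} else 0)"
    proof (cases "real k > tt m A x")
      case True
      have "(\<integral>\<^sup>+zc. indicator {z. real z > m^(Suc n) * x} (fst zc) \<partial>isum2 (Gj p m A n (m*x)) k)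
          = emeasure (iid_sum (gw p n) k) {z. real z > m^Suc n * x}"
        by (simp only: int_fst[where f="indicator _"] Gj_fst) simp
      then show ?thesis using True by simp
    qed simp
    finally show ?thesis .
  qed
  show ?thesis
    unfolding EN_def Gj.simps nn_integral_bind_pmf nn_integral_map_pmf snd_conv fst_conv
    using inner by (simp add: EN_def)
qed

lemma nat_pair_ineq: "(c + i) * (c + i - 1) \<le> c * (c - 1) + 2 * i * c" if "i \<le> 1" for c i :: nat
  using that by (cases i; cases c) (auto simp: algebra_simps)

lemma EM_Suc_le: "EM p m A (Suc n) x \<le> (\<integral>\<^sup>+k. of_nat k * EM p m A n (m*x)
    + of_nat (k*(k-1)) * (EN p m A n (m*x))\<^sup>2
    + 2 * indicator {k. real k > tt m A x} k * (of_nat k * EN p m A n (m*x)) \<partial>p)"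
proof -
  let ?I = "\<lambda>k zc. (if real k > tt m A x \<and> real (fst zc) > m^(Suc n) * x then 1 else (0::nat))"
  have inner: "(\<integral>\<^sup>+zc. of_nat ((snd zc + ?I k zc) * (snd zc + ?I k zc - 1)) \<partial>isum2 (Gj p m A n (m*x)) k)
      \<le> of_nat k * EM p m A n (m*x) + of_nat (k*(k-1)) * (EN p m A n (m*x))\<^sup>2
    + 2 * indicator {k. real k > tt m A x} k * (of_nat k * EN p m A n (m*x))" for k
  proof -
    have "(\<integral>\<^sup>+zc. of_nat ((snd zc + ?I k zc) * (snd zc + ?I k zc - 1)) \<partial>isum2 (Gj p m A n (m*x)) k)
        \<le> (\<integral>\<^sup>+zc. of_nat (snd zc * (snd zc - 1)) + 2 * indicator {k. real k > tt m A x} k * of_nat (snd zc)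
          \<partial>isum2 (Gj p m A n (m*x)) k)"
    proof (rule nn_integral_mono)
      fix zc :: "nat \<times> nat"
      have "(snd zc + ?I k zc) * (snd zc + ?I k zc - 1) \<le> snd zc * (snd zc - 1) + 2 * ?I k zc * snd zc"
        by (rule nat_pair_ineq) simp
      also have "\<dots> \<le> snd zc * (snd zc - 1) + 2 * (if real k > tt m A x then 1 else 0) * snd zc"
        by auto
      finally have "(of_nat ((snd zc + ?I k zc) * (snd zc + ?I k zc - 1)) :: ennreal)
          \<le> of_nat (snd zc * (snd zc - 1) + 2 * (if real k > tt m A x then 1 else 0) * snd zc)"
        by (simp only: of_nat_le_iff)
      also have "(of_nat (snd zc * (snd zc - 1) + 2 * (if real k > tt m A x then 1 else 0) * snd zc) :: ennreal)
          = of_nat (snd zc * (snd zc - 1)) + 2 * indicator {k. real k > tt m A x} k * of_nat (snd zc)"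
        by (cases "real k > tt m A x") (simp_all add: indicator_def)
      finally show "(of_nat ((snd zc + ?I k zc) * (snd zc + ?I k zc - 1)) :: ennreal)
          \<le> of_nat (snd zc * (snd zc - 1)) + 2 * indicator {k. real k > tt m A x} k * of_nat (snd zc)" .
    qed
    also have "\<dots> = (\<integral>\<^sup>+zc. of_nat (snd zc * (snd zc - 1)) \<partial>isum2 (Gj p m A n (m*x)) k)
        + 2 * indicator {k. real k > tt m A x} k * (\<integral>\<^sup>+zc. of_nat (snd zc) \<partial>isum2 (Gj p m A n (m*x)) k)"
      by (simp add: nn_integral_add nn_integral_cmult del: of_nat_mult)
    also have "\<dots> = of_nat k * EM p m A n (m*x) + of_nat (k*(k-1)) * (EN p m A n (m*x))\<^sup>2
        + 2 * indicator {k. real k > tt m A x} k * (of_nat k * EN p m A n (m*x))"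
      by (simp only: int_snd[where f=of_nat] int_snd[where f="\<lambda>c. of_nat (c * (c - 1))"] nn_M1 nn_M2)
         (simp add: EN_def EM_def)
    finally show ?thesis .
  qed
  show ?thesis
    unfolding EM_def Gj.simps nn_integral_bind_pmf nn_integral_map_pmf snd_conv fst_conv
    by (rule nn_integral_mono) (use inner in \<open>simp add: EN_def EM_def\<close>)
qed

definition SS :: "nat pmf \<Rightarrow> real \<Rightarrow> real \<Rightarrow> nat \<Rightarrow> real \<Rightarrow> real" where
  "SS p m A n x = (\<Sum>i<n. m ^ i * Fbar p (m ^ (i+1) * x + A * sqrt (m ^ (i+1) * x)))"

lemma Fbar_nonneg: "Fbar p t \<ge> 0" by (simp add: Fbar_def)
lemma Fbar_le1: "Fbar p t \<le> 1" by (simp add: Fbar_def)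

lemma emeasure_Fbar: "emeasure (measure_pmf p) {k. real k > t} = ennreal (Fbar p t)"
  by (simp add: Fbar_def measure_pmf.emeasure_eq_measure)

lemma SS_nonneg: "m \<ge> 0 \<Longrightarrow> SS p m A n x \<ge> 0"
  unfolding SS_def by (intro sum_nonneg mult_nonneg_nonneg) (auto simp: Fbar_nonneg)

lemma SS_Suc: "SS p m A (Suc n) x = Fbar p (tt m A x) + m * SS p m A n (m*x)"
  unfolding SS_def tt_def
  by (simp add: sum.lessThan_Suc_shift sum_distrib_left algebra_simps del: sum.lessThan_Suc)

context
  fixes p :: "nat pmf" and m K A :: real
  assumes pm1: "(\<integral>\<^sup>+k. of_nat k \<partial>p) = ennreal m"
    and pm2: "(\<integral>\<^sup>+k. of_nat (k*(k-1)) \<partial>p) = ennreal K"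
    and m1: "m > 1" and K0: "K \<ge> 0" and A0: "A > 0"
begin

lemma EN_upper: "EN p m A n x \<le> ennreal (SS p m A n x)"
proof (induction n arbitrary: x)
  case 0
  then show ?case by (simp add: EN_def SS_def)
next
  case (Suc n)
  have "EN p m A (Suc n) x \<le> (\<integral>\<^sup>+k. of_nat k * ennreal (SS p m A n (m*x)) + indicator {k. real k > tt m A x} k \<partial>p)"
    unfolding EN_Suc
  proof (rule nn_integral_mono)
    fix k :: nat
    have "emeasure (measure_pmf (iid_sum (gw p n) k)) {z. m ^ Suc n * x < real z} \<le> 1"
      by (simp add: measure_pmf.emeasure_le_1)
    then show "of_nat k * EN p m A n (m * x) +
         (if tt m A x < real k then emeasure (measure_pmf (iid_sum (gw p n) k)) {z. m ^ Suc n * x < real z} else 0)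
         \<le> of_nat k * ennreal (SS p m A n (m * x)) + indicator {k. tt m A x < real k} k"
      using Suc.IH[of "m*x"] by (auto intro!: add_mono mult_left_mono simp: indicator_def)
  qed
  also have "\<dots> = ennreal m * ennreal (SS p m A n (m*x)) + ennreal (Fbar p (tt m A x))"
    by (simp add: nn_integral_add nn_integral_multc pm1 emeasure_Fbar)
  also have "\<dots> = ennreal (SS p m A (Suc n) x)"
    using m1 SS_nonneg[of m p A n "m*x"] Fbar_nonneg[of p]
    by (simp add: SS_Suc ennreal_mult'' add.commute)
  finally show ?case .
qed

abbreviation "VV \<equiv> K / (m\<^sup>2 - m) - 1"
abbreviation "cc x \<equiv> VV / A\<^sup>2 + VV / (A * sqrt (m * x))"

lemma cc_mono: "VV \<ge> 0 \<Longrightarrow> x > 0 \<Longrightarrow> cc (m*x) \<le> cc x"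
proof -
  assume V0: "VV \<ge> 0" and x0: "x > 0"
  have "sqrt (m*x) \<le> sqrt (m*(m*x))" using m1 x0 by (simp add: real_sqrt_le_iff)
  then have "A * sqrt (m*x) \<le> A * sqrt (m*(m*x))" using A0 by simp
  moreover have "A * sqrt (m*x) > 0" using A0 m1 x0 by simp
  ultimately have "VV / (A * sqrt (m*(m*x))) \<le> VV / (A * sqrt (m*x))"
    using V0 by (intro divide_left_mono) auto
  then show ?thesis by simp
qed

lemma tail_bound:
  assumes V0: "VV \<ge> 0" and x0: "x > 0" and k: "real k > tt m A x"
  shows "measure_pmf.prob (iid_sum (gw p n) k) {z. real z > m^Suc n * x} \<ge> 1 - cc x"
proof -
  define s where "s = m*x"
  have s0: "s > 0" using m1 x0 by (simp add: s_def)
  have ks: "real k > s + A * sqrt s" using k by (simp add: tt_def s_def)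
  have As: "A * sqrt s > 0" using A0 s0 by simp
  define d where "d = real k - s"
  have d: "d > A * sqrt s" using ks by (simp add: d_def)
  have d0: "d > 0" using d As by simp
  have P: "measure_pmf.prob (iid_sum (gw p n) k) {z. real z \<le> m^n * s} \<le> real k * VV / (real k - s)\<^sup>2"
    by (rule cheb_gw[OF pm1 pm2 _ K0 m1 _ V0]) (use m1 d0 in \<open>auto simp: d_def\<close>)
  have kd: "real k = s + d" by (simp add: d_def)
  have "real k / d\<^sup>2 = s / d\<^sup>2 + 1 / d"
    using d0 unfolding kd by (simp add: field_simps power2_eq_square)
  then have gen: "real k * v / (real k - s)\<^sup>2 = v * (s / d\<^sup>2) + v * (1 / d)" for v
  proof -
    assume h: "real k / d\<^sup>2 = s / d\<^sup>2 + 1 / d"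
    have "real k * v / (real k - s)\<^sup>2 = v * (real k / d\<^sup>2)" by (simp add: d_def)
    also have "\<dots> = v * (s / d\<^sup>2 + 1 / d)" by (simp only: h)
    finally show ?thesis by (simp only: distrib_left)
  qed
  have "real k * VV / (real k - s)\<^sup>2 = VV * (s / d\<^sup>2) + VV * (1 / d)"
    by (rule gen)
  also have "\<dots> \<le> VV * (1 / A\<^sup>2) + VV * (1 / (A * sqrt s))"
  proof (intro add_mono mult_left_mono V0)
    have "(A * sqrt s)\<^sup>2 \<le> d\<^sup>2" using d As by (intro power_mono) auto
    then have "A\<^sup>2 * s \<le> d\<^sup>2" using s0 by (simp add: power_mult_distrib)
    then show "s / d\<^sup>2 \<le> 1 / A\<^sup>2" using A0 s0 d0 by (simp add: field_simps)
    show "1 / d \<le> 1 / (A * sqrt s)" using d As by (intro divide_left_mono) auto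
  qed
  finally have "measure_pmf.prob (iid_sum (gw p n) k) {z. real z \<le> m^n * s} \<le> cc x"
    using P by (simp add: s_def)
  moreover have "measure_pmf.prob (iid_sum (gw p n) k) {z. real z > m^Suc n * x}
      = 1 - measure_pmf.prob (iid_sum (gw p n) k) {z. real z \<le> m^n * s}"
  proof -
    have "{z. real z > m^Suc n * x} = UNIV - {z. real z \<le> m^n * s}"
      by (auto simp: s_def algebra_simps)
    then show ?thesis
      using measure_pmf.prob_compl[where M="iid_sum (gw p n) k" and A="{z. real z \<le> m^n * s}"] by simp
  qed
  ultimately show ?thesis by simp
qed

lemma EN_lower:
  assumes V0: "VV \<ge> 0"
  shows "x > 0 \<Longrightarrow> ennreal ((1 - cc x) * SS p m A n x) \<le> EN p m A n x"
proof (induction n arbitrary: x)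
  case 0
  then show ?case by (simp add: SS_def)
next
  case (Suc n)
  show ?case
  proof (cases "1 - cc x \<le> 0")
    case True
    then have "(1 - cc x) * SS p m A (Suc n) x \<le> 0"
      using SS_nonneg[of m p A "Suc n" x] m1 by (simp add: mult_nonpos_nonneg)
    then show ?thesis by (simp add: ennreal_neg)
  next
    case False
    define c1 where "c1 = 1 - cc x"
    have c1: "c1 > 0" using False by (simp add: c1_def)
    have mx: "m * x > 0" using m1 Suc.prems by simp
    have IH: "ennreal (c1 * SS p m A n (m*x)) \<le> EN p m A n (m*x)"
    proof -
      have "c1 * SS p m A n (m*x) \<le> (1 - cc (m*x)) * SS p m A n (m*x)"
        using cc_mono[OF V0 Suc.prems] SS_nonneg[of m p A n "m*x"] m1
        by (intro mult_right_mono) (auto simp: c1_def)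
      then have "ennreal (c1 * SS p m A n (m*x)) \<le> ennreal ((1 - cc (m*x)) * SS p m A n (m*x))"
        by (rule ennreal_leI)
      also have "\<dots> \<le> EN p m A n (m*x)" by (rule Suc.IH[OF mx])
      finally show ?thesis .
    qed
    have "(\<integral>\<^sup>+k. of_nat k * ennreal (c1 * SS p m A n (m*x)) + ennreal c1 * indicator {k. real k > tt m A x} k \<partial>p)
        \<le> EN p m A (Suc n) x"
      unfolding EN_Suc
    proof (rule nn_integral_mono)
      fix k :: nat
      have "ennreal c1 * indicator {k. real k > tt m A x} k
         \<le> (if tt m A x < real k then emeasure (measure_pmf (iid_sum (gw p n) k)) {z. m ^ Suc n * x < real z} else 0)"
      proof (cases "tt m A x < real k")
        case True
        have "ennreal c1 \<le> ennreal (measure_pmf.prob (iid_sum (gw p n) k) {z. m ^ Suc n * x < real z})"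
          using tail_bound[OF V0 Suc.prems True, of n] by (intro ennreal_leI) (simp add: c1_def)
        then show ?thesis using True by (simp add: measure_pmf.emeasure_eq_measure)
      qed simp
      then show "of_nat k * ennreal (c1 * SS p m A n (m*x)) + ennreal c1 * indicator {k. real k > tt m A x} k
        \<le> of_nat k * EN p m A n (m * x) +
         (if tt m A x < real k then emeasure (measure_pmf (iid_sum (gw p n) k)) {z. m ^ Suc n * x < real z} else 0)"
        using IH by (intro add_mono mult_left_mono) auto
    qed
    moreover have "(\<integral>\<^sup>+k. of_nat k * ennreal (c1 * SS p m A n (m*x)) + ennreal c1 * indicator {k. real k > tt m A x} k \<partial>p)
        = ennreal m * ennreal (c1 * SS p m A n (m*x)) + ennreal c1 * ennreal (Fbar p (tt m A x))"
      by (simp add: nn_integral_add nn_integral_multc nn_integral_cmult_indicator pm1 emeasure_Fbar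
          del: ennreal_mult_eq_top_iff)
    moreover have "\<dots> = ennreal ((1 - cc x) * SS p m A (Suc n) x)"
    proof -
      have e: "(1 - cc x) * SS p m A (Suc n) x = m * (c1 * SS p m A n (m*x)) + c1 * Fbar p (tt m A x)"
        unfolding SS_Suc c1_def[symmetric] by (simp add: algebra_simps)
      have n1: "m * (c1 * SS p m A n (m*x)) \<ge> 0" using m1 c1 SS_nonneg[of m p A n "m*x"] by simp
      have n2: "c1 * Fbar p (tt m A x) \<ge> 0" using c1 Fbar_nonneg[of p] by simp
      show ?thesis unfolding e ennreal_plus[OF n1 n2]
        using m1 c1 SS_nonneg[of m p A n "m*x"] Fbar_nonneg[of p]
        by (simp add: ennreal_mult)
    qed
    ultimately show ?thesis by simp
  qed
qed

lemma p_sq: "(\<integral>\<^sup>+k. of_nat (k*k) \<partial>p) = ennreal (K + m)"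
proof -
  have "(\<integral>\<^sup>+k. of_nat (k*k) \<partial>p) = (\<integral>\<^sup>+k. of_nat (k*(k-1)) + of_nat k \<partial>p)"
  proof (rule nn_integral_cong)
    fix k :: nat
    have "k*k = k*(k-1) + k" by (cases k) auto
    then show "(of_nat (k*k) :: ennreal) = of_nat (k*(k-1)) + of_nat k"
      by (metis of_nat_add)
  qed
  also have "\<dots> = ennreal K + ennreal m"
    by (simp add: nn_integral_add pm1 pm2[simplified])
  finally show ?thesis using K0 m1 by simp
qed

lemma sq_c: "c \<ge> 0 \<Longrightarrow> (\<integral>\<^sup>+k. of_nat (k*k) * ennreal c \<partial>p) = ennreal ((K + m) * c)"
proof -
  assume c0: "c \<ge> 0"
  have "(\<integral>\<^sup>+k. of_nat (k*k) * ennreal c \<partial>p) = (\<integral>\<^sup>+k. of_nat (k*k) \<partial>p) * ennreal c"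
    by (rule nn_integral_multc) simp
  also have "\<dots> = ennreal ((K + m) * c)" using c0 K0 m1 by (simp only: p_sq ennreal_mult)
  finally show ?thesis .
qed

lemma Fbar_anti: "t \<le> t' \<Longrightarrow> Fbar p t' \<le> Fbar p t"
  unfolding Fbar_def by (intro measure_pmf.finite_measure_mono) auto

lemma Fbar_bound: "t > 0 \<Longrightarrow> Fbar p t \<le> (K + m) / t\<^sup>2"
proof -
  assume t0: "t > 0"
  have "ennreal (Fbar p t) = (\<integral>\<^sup>+k. indicator {k. real k > t} k \<partial>p)"
    by (simp add: emeasure_Fbar)
  also have "\<dots> \<le> (\<integral>\<^sup>+k. of_nat (k*k) * ennreal (1 / t\<^sup>2) \<partial>p)"
  proof (rule nn_integral_mono)
    fix k :: nat
    show "indicator {k. real k > t} k \<le> of_nat (k*k) * ennreal (1 / t\<^sup>2)"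
    proof (cases "real k > t")
      case True
      then have "t\<^sup>2 \<le> (real k)\<^sup>2" using t0 by (intro power_mono) auto
      then have "1 \<le> real (k*k) * (1 / t\<^sup>2)" using t0 by (simp add: field_simps power2_eq_square)
      then have "ennreal 1 \<le> ennreal (real (k*k) * (1 / t\<^sup>2))" by (rule ennreal_leI)
      then have "1 \<le> ennreal (real (k*k)) * ennreal (1 / t\<^sup>2)"
        by (metis ennreal_1 ennreal_mult' of_nat_0_le_iff)
      then show ?thesis using True
        by (simp add: ennreal_of_nat_eq_real_of_nat[of "k*k"] del: of_nat_mult)
    qed simp
  qed
  also have "\<dots> = ennreal ((K + m) / t\<^sup>2)"
    using t0 by (subst sq_c) auto
  finally show ?thesis using K0 m1 t0 by (subst (asm) ennreal_le_iff) auto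
qed

lemma e_bound: "t > 0 \<Longrightarrow> (\<integral>\<^sup>+k. indicator {k. real k > t} k * of_nat k \<partial>p) \<le> ennreal ((K + m) / t)"
proof -
  assume t0: "t > 0"
  have "(\<integral>\<^sup>+k. indicator {k. real k > t} k * of_nat k \<partial>p) \<le> (\<integral>\<^sup>+k. of_nat (k*k) * ennreal (1 / t) \<partial>p)"
  proof (rule nn_integral_mono)
    fix k :: nat
    show "indicator {k. real k > t} k * of_nat k \<le> of_nat (k*k) * ennreal (1 / t)"
    proof (cases "real k > t")
      case True
      then have "real k \<le> real (k*k) * (1 / t)" using t0
        by (simp add: field_simps)
      then have "ennreal (real k) \<le> ennreal (real (k*k) * (1 / t))" by (rule ennreal_leI)
      then have "ennreal (real k) \<le> ennreal (real (k*k)) * ennreal (1 / t)"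
        by (metis ennreal_mult' of_nat_0_le_iff)
      then show ?thesis using True
        by (simp add: ennreal_of_nat_eq_real_of_nat[of "k*k"] ennreal_of_nat_eq_real_of_nat[of k] del: of_nat_mult)
    qed simp
  qed
  also have "\<dots> = ennreal ((K + m) / t)"
    using t0 by (subst sq_c) auto
  finally show ?thesis .
qed

lemma SS_bound: "y > 0 \<Longrightarrow> SS p m A n y \<le> (K + m) / (m * (m - 1)) / y\<^sup>2"
proof -
  assume y0: "y > 0"
  have "SS p m A n y \<le> (\<Sum>i<n. m^i * ((K + m) / (m^(i+1) * y)\<^sup>2))"
    unfolding SS_def
  proof (intro sum_mono mult_left_mono)
    fix i
    have pos: "m^(i+1) * y > 0" using m1 y0 by simp
    have "Fbar p (m ^ (i+1) * y + A * sqrt (m ^ (i+1) * y)) \<le> Fbar p (m ^ (i+1) * y)"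
      using pos A0 by (intro Fbar_anti) simp
    also have "\<dots> \<le> (K + m) / (m^(i+1) * y)\<^sup>2" by (rule Fbar_bound[OF pos])
    finally show "Fbar p (m ^ (i+1) * y + A * sqrt (m ^ (i+1) * y)) \<le> (K + m) / (m^(i+1) * y)\<^sup>2" .
  qed (use m1 in simp)
  also have "\<dots> = (K + m) / (m\<^sup>2 * y\<^sup>2) * (\<Sum>i<n. (1/m)^i)"
    unfolding sum_distrib_left
    by (intro sum.cong refl) (use m1 y0 in \<open>simp add: field_simps power2_eq_square power_mult_distrib\<close>)
  also have "\<dots> \<le> (K + m) / (m\<^sup>2 * y\<^sup>2) * (1 / (1 - 1/m))"
    using m1 K0 y0 by (intro mult_left_mono less_imp_le[OF geometric_sum_less]) auto
  also have "\<dots> = (K + m) / (m * (m - 1)) / y\<^sup>2"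
  proof -
    have "m \<noteq> 0" "m - 1 \<noteq> 0" "y \<noteq> 0" using m1 y0 by auto
    then show ?thesis by (simp add: field_simps power2_eq_square)
  qed
  finally show ?thesis .
qed

abbreviation "C1 \<equiv> (K + m) / (m * (m - 1))"
abbreviation "\<alpha> \<equiv> (K * C1 + 2 * (K + m)) / (m - 1)"

lemma EM_real_step:
  fixes x S F :: real
  assumes x1: "x \<ge> 1" and S0: "S \<ge> 0" and SB: "S \<le> C1 / (m*x)\<^sup>2" and F0: "F \<ge> 0"
  shows "m * (\<alpha> / (m*x) * S) + K * S\<^sup>2 + 2 * ((K + m) / (m*x)) * S \<le> \<alpha> / x * (F + m * S)"
proof -
  have C10: "C1 \<ge> 0" using m1 K0 by simp
  have mx: "(m*x)\<^sup>2 \<ge> x"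
  proof -
    have "m*x \<ge> 1*x" using m1 x1 by (intro mult_right_mono) auto
    then have "(m*x)*(m*x) \<ge> x * 1" using x1 by (intro mult_mono; linarith)
    then show ?thesis by (simp add: power2_eq_square)
  qed
  have "(m*x)\<^sup>2 > 0" using m1 x1 by simp
  then have "C1 / (m*x)\<^sup>2 \<le> C1 / x" using C10 mx x1 by (intro divide_left_mono) auto
  then have SB': "S \<le> C1 / x" using SB by simp
  have "S*S \<le> (C1/x)*S" using SB' S0 by (rule mult_right_mono)
  then have "K*(S*S) \<le> K*((C1/x)*S)" using K0 by (rule mult_left_mono)
  then have h1: "K * S\<^sup>2 \<le> K*((C1/x)*S)" by (simp only: power2_eq_square)
  have "(K + m) / (m*x) \<le> (K + m) / x" using m1 K0 x1 by (intro divide_left_mono) auto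
  then have "2 * ((K + m) / (m*x)) \<le> 2 * ((K + m) / x)" by linarith
  then have h2: "2 * ((K + m) / (m*x)) * S \<le> (2 * ((K + m) / x)) * S"
    using S0 by (rule mult_right_mono)
  have h0: "m * (\<alpha> / (m*x) * S) = \<alpha> / x * S" using m1 by simp
  have "m - 1 \<noteq> 0" using m1 by simp
  then have "\<alpha> * (m - 1) = K * C1 + 2 * (K + m)" by simp
  moreover have gen: "\<And>a b1 b2 :: real. a*(m-1) = b1 + b2 \<Longrightarrow> a + b1 + b2 = a*m"
    by (auto simp: algebra_simps)
  ultimately have al: "\<alpha> + K * C1 + 2 * (K + m) = \<alpha> * m" by blast
  have "m * (\<alpha> / (m*x) * S) + K * S\<^sup>2 + 2 * ((K + m) / (m*x)) * S
      \<le> \<alpha> / x * S + K*((C1/x)*S) + (2 * ((K + m) / x)) * S"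
    using h0 h1 h2 by linarith
  also have "\<dots> = (\<alpha> + K * C1 + 2 * (K + m)) / x * S"
  proof -
    have gen2: "\<And>a b c :: real. a/x*S + K*((b/x)*S) + (2*(c/x))*S = (a + K*b + 2*c)/x*S"
      by (simp add: add_divide_distrib algebra_simps)
    show ?thesis by (rule gen2)
  qed
  also have "\<dots> = \<alpha> / x * (m * S)" unfolding al by (simp only: times_divide_eq_left mult.assoc)
  also have "\<dots> \<le> \<alpha> / x * (F + m * S)"
  proof -
    have "\<alpha> \<ge> 0" using m1 K0 C10 by simp
    then have "\<alpha> / x \<ge> 0" by (rule divide_nonneg_nonneg) (use x1 in simp)
    moreover have "m * S \<le> F + m * S" using F0 by simp
    ultimately show ?thesis by (intro mult_left_mono)
  qed
  finally show ?thesis .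
qed

lemma EM_upper: "x \<ge> 1 \<Longrightarrow> EM p m A n x \<le> ennreal (\<alpha> / x * SS p m A n x)"
proof (induction n arbitrary: x)
  case 0
  then show ?case by (simp add: EM_def)
next
  case (Suc n)
  define S where "S = SS p m A n (m*x)"
  define a1 where "a1 = \<alpha> / (m*x) * S"
  define e where "e = (\<integral>\<^sup>+k. indicator {k. real k > tt m A x} k * of_nat k \<partial>p)"
  have x0: "x > 0" using Suc.prems by simp
  have mx1: "m * x \<ge> 1" using m1 Suc.prems
    using m1 Suc.prems mult_mono[of 1 m 1 x] by simp
  have S0: "S \<ge> 0" using SS_nonneg[of m p A n "m*x"] m1 by (simp add: S_def)
  have EM': "EM p m A n (m*x) \<le> ennreal a1" using Suc.IH[OF mx1] by (simp add: a1_def S_def)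
  have EN': "EN p m A n (m*x) \<le> ennreal S" using EN_upper by (simp add: S_def)
  have "EM p m A (Suc n) x \<le> (\<integral>\<^sup>+k. of_nat k * EM p m A n (m*x)
    + of_nat (k*(k-1)) * (EN p m A n (m*x))\<^sup>2
    + 2 * indicator {k. real k > tt m A x} k * (of_nat k * EN p m A n (m*x)) \<partial>p)"
    by (rule EM_Suc_le)
  also have "\<dots> \<le> (\<integral>\<^sup>+k. of_nat k * ennreal a1
    + of_nat (k*(k-1)) * (ennreal S)\<^sup>2
    + (indicator {k. real k > tt m A x} k * of_nat k) * (2 * ennreal S) \<partial>p)"
  proof (rule nn_integral_mono)
    fix k :: nat
    have "2 * indicator {k. real k > tt m A x} k * (of_nat k * EN p m A n (m*x))
        \<le> 2 * indicator {k. real k > tt m A x} k * (of_nat k * ennreal S)"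
      using EN' by (intro mult_left_mono) auto
    also have "\<dots> = (indicator {k. real k > tt m A x} k * of_nat k) * (2 * ennreal S)"
      by (simp only: mult.assoc mult.commute mult.left_commute)
    finally show "of_nat k * EM p m A n (m*x)
      + of_nat (k*(k-1)) * (EN p m A n (m*x))\<^sup>2
      + 2 * indicator {k. real k > tt m A x} k * (of_nat k * EN p m A n (m*x))
      \<le> of_nat k * ennreal a1 + of_nat (k*(k-1)) * (ennreal S)\<^sup>2
      + (indicator {k. real k > tt m A x} k * of_nat k) * (2 * ennreal S)"
      using EM' EN' by (intro add_mono mult_left_mono power_mono) auto
  qed
  also have "\<dots> = ennreal m * ennreal a1 + ennreal K * (ennreal S)\<^sup>2 + e * (2 * ennreal S)"
  proof -
    have i1: "(\<integral>\<^sup>+k. of_nat k * ennreal a1 \<partial>p) = ennreal m * ennreal a1"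
    proof -
      have "(\<integral>\<^sup>+k. of_nat k * ennreal a1 \<partial>p) = (\<integral>\<^sup>+k. of_nat k \<partial>p) * ennreal a1"
        by (rule nn_integral_multc) simp
      then show ?thesis by (simp only: pm1)
    qed
    have i2: "(\<integral>\<^sup>+k. of_nat (k*(k-1)) * (ennreal S)\<^sup>2 \<partial>p) = ennreal K * (ennreal S)\<^sup>2"
    proof -
      have "(\<integral>\<^sup>+k. of_nat (k*(k-1)) * (ennreal S)\<^sup>2 \<partial>p) = (\<integral>\<^sup>+k. of_nat (k*(k-1)) \<partial>p) * (ennreal S)\<^sup>2"
        by (rule nn_integral_multc) simp
      then show ?thesis by (simp only: pm2)
    qed
    have i3: "(\<integral>\<^sup>+k. (indicator {k. real k > tt m A x} k * of_nat k) * (2 * ennreal S) \<partial>p) = e * (2 * ennreal S)"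
      unfolding e_def by (rule nn_integral_multc) simp
    show ?thesis
      by (subst nn_integral_add, simp, simp, subst nn_integral_add, simp, simp) (simp only: i1 i2 i3)
  qed
  also have "\<dots> \<le> ennreal m * ennreal a1 + ennreal K * (ennreal S)\<^sup>2 + ennreal ((K + m) / (m*x)) * (2 * ennreal S)"
  proof -
    have "tt m A x \<ge> m * x" using A0 x0 m1 by (simp add: tt_def)
    moreover have "m * x > 0" using m1 x0 by simp
    ultimately have "(K + m) / tt m A x \<le> (K + m) / (m*x)"
      using K0 m1 by (intro divide_left_mono) auto
    then have "e \<le> ennreal ((K + m) / (m*x))"
    proof -
      have "tt m A x > 0" using \<open>m*x > 0\<close> \<open>tt m A x \<ge> m*x\<close> by linarith
      from order_trans[OF e_bound[OF this] ennreal_leI[OF \<open>(K + m) / tt m A x \<le> (K + m) / (m*x)\<close>]]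
      show ?thesis unfolding e_def .
    qed
    then show ?thesis by (intro add_mono mult_right_mono) auto
  qed
  also have "\<dots> = ennreal (m * a1 + K * S\<^sup>2 + 2 * ((K + m) / (m*x)) * S)"
  proof -
    have a10: "a1 \<ge> 0" using S0 m1 K0 x0 by (simp add: a1_def)
    have q0: "(K + m) / (m*x) \<ge> 0" using m1 K0 x0 by simp
    have t1: "ennreal (m*a1) = ennreal m * ennreal a1" using m1 a10 by (simp add: ennreal_mult)
    have t2: "ennreal (K*S\<^sup>2) = ennreal K * (ennreal S)\<^sup>2" using K0 S0 by (simp add: ennreal_mult ennreal_power)
    have t3: "ennreal (2*((K + m) / (m*x))*S) = ennreal ((K + m) / (m*x)) * (2 * ennreal S)"
    proof -
      have "2*((K + m) / (m*x))*S = ((K + m) / (m*x)) * (2*S)" by simp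
      moreover have "ennreal (2*S) = 2 * ennreal S" using S0 by (simp add: ennreal_mult)
      ultimately show ?thesis using q0 S0 by (simp only: ennreal_mult)
    qed
    have n1: "m*a1 \<ge> 0" "K*S\<^sup>2 \<ge> 0" using m1 a10 K0 S0 by auto
    have n3: "2*((K + m) / (m*x))*S \<ge> 0" by (rule mult_nonneg_nonneg[OF mult_nonneg_nonneg[OF _ q0] S0]) simp
    have "ennreal (m * a1 + K * S\<^sup>2 + 2 * ((K + m) / (m*x)) * S)
        = ennreal (m*a1) + ennreal (K*S\<^sup>2) + ennreal (2*((K + m) / (m*x))*S)"
      using n1 n3 by (metis ennreal_plus add_nonneg_nonneg)
    then show ?thesis by (simp only: t1 t2 t3)
  qed
  also have "\<dots> \<le> ennreal (\<alpha> / x * SS p m A (Suc n) x)"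
  proof (rule ennreal_leI)
    have SB: "S \<le> C1 / (m*x)\<^sup>2" unfolding S_def by (rule SS_bound) (use m1 x0 in simp)
    show "m * a1 + K * S\<^sup>2 + 2 * ((K + m) / (m*x)) * S \<le> \<alpha> / x * SS p m A (Suc n) x"
      unfolding SS_Suc S_def[symmetric] a1_def
      by (rule EM_real_step[OF Suc.prems S0 SB Fbar_nonneg])
  qed
  finally show ?case .
qed

lemma main_bound:
  assumes V0: "VV \<ge> 0" and x1: "x \<ge> 1"
  shows "measure_pmf.prob (gw p n) {k. real k / m^n > x} \<ge> (1 - cc x - \<alpha> / x) * SS p m A n x"
proof -
  let ?G = "Gj p m A n x"
  define P where "P = measure_pmf.prob ?G {zc. snd zc > 0}"
  define S where "S = SS p m A n x"
  have S0: "S \<ge> 0" using SS_nonneg[of m p A n x] m1 by (simp add: S_def)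
  have "EN p m A n x \<le> (\<integral>\<^sup>+zc. indicator {zc. snd zc > 0} zc + of_nat (snd zc * (snd zc - 1)) \<partial>?G)"
    unfolding EN_def
  proof (rule nn_integral_mono)
    fix zc :: "nat \<times> nat"
    show "(of_nat (snd zc) :: ennreal) \<le> indicator {zc. snd zc > 0} zc + of_nat (snd zc * (snd zc - 1))"
    proof (cases "snd zc")
      case (Suc c)
      have "Suc c \<le> 1 + Suc c * c" by (cases c) auto
      then have "(of_nat (Suc c) :: ennreal) \<le> of_nat (1 + Suc c * c)" by (simp only: of_nat_le_iff)
      then show ?thesis using Suc by (simp add: indicator_def del: of_nat_mult mult_Suc)
    qed simp
  qed
  also have "\<dots> = ennreal P + EM p m A n x"
    by (simp add: nn_integral_add EM_def P_def measure_pmf.emeasure_eq_measure del: of_nat_mult)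
  also have "\<dots> \<le> ennreal P + ennreal (\<alpha> / x * S)"
    using EM_upper[OF x1, of n] by (simp add: S_def)
  finally have "ennreal ((1 - cc x) * S) \<le> ennreal P + ennreal (\<alpha> / x * S)"
    using EN_lower[OF V0, of x n] x1 by (simp add: S_def)
  moreover have "\<alpha> / x * S \<ge> 0"
  proof -
    have "\<alpha> \<ge> 0" using m1 K0 by simp
    then have "\<alpha> / x \<ge> 0" by (rule divide_nonneg_nonneg) (use x1 in simp)
    then show ?thesis using S0 by (rule mult_nonneg_nonneg)
  qed
  moreover have "P \<ge> 0" by (simp add: P_def)
  ultimately have "ennreal ((1 - cc x) * S) \<le> ennreal (P + \<alpha> / x * S)" by simp
  then have "(1 - cc x) * S \<le> P + \<alpha> / x * S"
    using \<open>P \<ge> 0\<close> \<open>\<alpha> / x * S \<ge> 0\<close> by (subst (asm) ennreal_le_iff) auto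
  then have "(1 - cc x - \<alpha> / x) * S \<le> P" by (simp add: algebra_simps)
  also have "P \<le> measure_pmf.prob (gw p n) {k. real k / m^n > x}"
    unfolding P_def by (rule prob_gw_ge) (use m1 in simp)
  finally show ?thesis by (simp add: S_def)
qed

end

lemma insens_step:
  assumes "sqrt_insensitive p" "d < 1"
  shows "\<exists>y0\<ge>0. \<forall>y\<ge>y0. Fbar p (y + sqrt y) \<ge> d * Fbar p y"
proof -
  have "((\<lambda>x. if Fbar p (x + sqrt x) = 0 \<and> Fbar p x = 0 then 1 else Fbar p (x + sqrt x) / Fbar p x) \<longlongrightarrow> 1) at_top"
    using assms(1) unfolding sqrt_insensitive_def by (rule asymp_equivD)
  then have "eventually (\<lambda>x. (if Fbar p (x + sqrt x) = 0 \<and> Fbar p x = 0 then 1 else Fbar p (x + sqrt x) / Fbar p x) > d) at_top"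
    using assms(2) by (rule order_tendstoD)
  then obtain y1 where y1: "\<And>y. y \<ge> y1 \<Longrightarrow>
      (if Fbar p (y + sqrt y) = 0 \<and> Fbar p y = 0 then 1 else Fbar p (y + sqrt y) / Fbar p y) > d"
    by (auto simp: eventually_at_top_linorder)
  show ?thesis
  proof (intro exI[of _ "max 0 y1"] conjI allI impI)
    fix y assume y: "max 0 y1 \<le> y"
    have r: "(if Fbar p (y + sqrt y) = 0 \<and> Fbar p y = 0 then 1 else Fbar p (y + sqrt y) / Fbar p y) > d"
      using y1 y by simp
    show "Fbar p (y + sqrt y) \<ge> d * Fbar p y"
    proof (cases "Fbar p y = 0")
      case True
      then show ?thesis using Fbar_nonneg[of p] by simp
    next
      case False
      then have F0: "Fbar p y > 0" using Fbar_nonneg[of p y] by simp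
      then have "Fbar p (y + sqrt y) / Fbar p y > d" using r False by simp
      then show ?thesis using F0 by (simp add: pos_less_divide_eq less_imp_le)
    qed
  qed simp
qed

fun hit :: "nat \<Rightarrow> real \<Rightarrow> real" where
  "hit 0 y = y"
| "hit (Suc j) y = hit j y + sqrt (hit j y)"

lemma hit_ge: "y \<ge> 0 \<Longrightarrow> hit j y \<ge> y + real j * sqrt y"
proof (induction j)
  case (Suc j)
  have "hit j y \<ge> y" using Suc by (smt (verit) mult_nonneg_nonneg of_nat_0_le_iff real_sqrt_ge_zero)
  then have s: "sqrt (hit j y) \<ge> sqrt y" by simp
  have e: "real (Suc j) * sqrt y = real j * sqrt y + sqrt y" by (simp add: algebra_simps)
  have "hit (Suc j) y = hit j y + sqrt (hit j y)" by simp
  then show ?case using Suc.IH[OF Suc.prems] s e by linarith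
qed simp

lemma insens_bound:
  assumes ins: "sqrt_insensitive p" and A0: "A > 0" and d1: "\<delta> < 1"
  shows "\<exists>y0. \<forall>y\<ge>y0. Fbar p (y + A * sqrt y) \<ge> \<delta> * Fbar p y"
proof (cases "\<delta> \<le> 0")
  case True
  then show ?thesis using Fbar_nonneg[of p]
    by (intro exI[of _ 0] allI impI) (meson mult_nonpos_nonneg order.trans)
next
  case False
  define N where "N = nat \<lceil>A\<rceil>"
  have NA: "real N \<ge> A" unfolding N_def by linarith
  have N1: "N \<ge> 1" using A0 unfolding N_def by linarith
  define d where "d = 1 - (1 - \<delta>) / real N"
  have d1': "d < 1" using d1 N1 by (simp add: d_def)
  have d0: "d \<ge> 0"
  proof -
    have "(1 - \<delta>) / real N \<le> (1 - \<delta>) / 1" using N1 d1 by (intro divide_left_mono) auto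
    then show ?thesis using False by (simp add: d_def)
  qed
  have dN: "d ^ N \<ge> \<delta>"
  proof -
    have "1 + real N * (- ((1 - \<delta>) / real N)) \<le> (1 + (- ((1 - \<delta>) / real N))) ^ N"
    proof (rule Bernoulli_inequality)
      have "(1 - \<delta>) / real N \<le> (1 - \<delta>) / 1" using N1 d1 by (intro divide_left_mono) auto
      then show "-1 \<le> - ((1 - \<delta>) / real N)" using False by (simp only: div_by_1)
    qed
    then show ?thesis using N1 by (simp add: d_def)
  qed
  obtain y0 where y0: "y0 \<ge> 0" "\<And>y. y \<ge> y0 \<Longrightarrow> Fbar p (y + sqrt y) \<ge> d * Fbar p y"
    using insens_step[OF ins d1'] by blast
  have it: "y \<ge> y0 \<Longrightarrow> Fbar p (hit j y) \<ge> d ^ j * Fbar p y" for y j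
  proof (induction j)
    case (Suc j)
    have "hit j y \<ge> y" using hit_ge[of y j] Suc.prems y0(1)
      by (smt (verit) mult_nonneg_nonneg of_nat_0_le_iff real_sqrt_ge_zero)
    then have "Fbar p (hit (Suc j) y) \<ge> d * Fbar p (hit j y)" using y0(2)[of "hit j y"] Suc.prems by simp
    moreover have "d * Fbar p (hit j y) \<ge> d * (d ^ j * Fbar p y)"
      using Suc d0 by (intro mult_left_mono) auto
    ultimately show ?case by simp
  qed simp
  show ?thesis
  proof (intro exI[of _ y0] allI impI)
    fix y assume y: "y \<ge> y0"
    have "y + A * sqrt y \<le> y + real N * sqrt y" using NA y y0(1) by (intro add_left_mono mult_right_mono) auto
    also have "\<dots> \<le> hit N y" using hit_ge[of y N] y y0(1) by simp
    finally have "Fbar p (hit N y) \<le> Fbar p (y + A * sqrt y)"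
      unfolding Fbar_def by (intro measure_pmf.finite_measure_mono) auto
    moreover have "\<delta> * Fbar p y \<le> d ^ N * Fbar p y" using dN Fbar_nonneg[of p y] by (rule mult_right_mono)
    ultimately show "\<delta> * Fbar p y \<le> Fbar p (y + A * sqrt y)" using it[OF y, of N] by simp
  qed
qed

theorem lemma2:
  fixes p :: "nat pmf"
  defines "m \<equiv> off_mean p"
  defines "\<sigma>2 \<equiv> off_var p"
  assumes var_fin: "integrable (measure_pmf p) (\<lambda>k. (real k)\<^sup>2)"
  assumes mean_gt: "m > 1"
  shows "(\<forall>A>0. \<forall>\<epsilon>>0. \<exists>x0. \<forall>x\<ge>x0. \<forall>n\<ge>1.
            measure_pmf.prob (gw p n) {k. real k / m ^ n > x}
              \<ge> (1 - \<sigma>2 / ((m\<^sup>2 - m) * A\<^sup>2) - \<epsilon>) *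
                 (\<Sum>i<n. m ^ i * Fbar p (m ^ (i+1) * x + A * sqrt (m ^ (i+1) * x))))
       \<and> (sqrt_insensitive p \<longrightarrow>
           (\<forall>\<epsilon>>0. \<exists>x0. \<forall>x\<ge>x0. \<forall>n\<ge>1.
              measure_pmf.prob (gw p n) {k. real k / m ^ n > x}
                \<ge> (1 - \<epsilon>) * (\<Sum>i<n. m ^ i * Fbar p (m ^ (i+1) * x))))"
proof -
  define K where "K = \<sigma>2 + m\<^sup>2 - m"
  have pm1: "(\<integral>\<^sup>+k. of_nat k \<partial>p) = ennreal m"
    using pmf_moments(1)[OF var_fin] by (simp add: m_def)
  have pm2: "(\<integral>\<^sup>+k. of_nat (k*(k-1)) \<partial>p) = ennreal K"
    using pmf_moments(2)[OF var_fin] by (simp add: m_def \<sigma>2_def K_def)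
  have s0: "\<sigma>2 \<ge> 0" using pmf_moments(3)[OF var_fin] by (simp add: \<sigma>2_def)
  have mm: "m\<^sup>2 - m > 0" using mean_gt by (simp add: power2_eq_square)
  have K0: "K \<ge> 0" using s0 mm by (simp add: K_def)
  define V where "V = \<sigma>2 / (m\<^sup>2 - m)"
  have VV: "K / (m\<^sup>2 - m) - 1 = V" using mm by (simp add: K_def V_def field_simps)
  have V0: "V \<ge> 0" using s0 mm by (simp add: V_def)
  have cV: "\<sigma>2 / ((m\<^sup>2 - m) * A\<^sup>2) = V / A\<^sup>2" for A by (simp add: V_def)
  define al where "al = (K * ((K + m) / (m * (m - 1))) + 2 * (K + m)) / (m - 1)"
  have al0: "al \<ge> 0" using K0 mean_gt by (simp add: al_def)
  have SSnn: "(\<Sum>i<n. m ^ i * Fbar p (t i)) \<ge> 0" for n t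
    using mean_gt by (intro sum_nonneg mult_nonneg_nonneg) (auto simp: Fbar_nonneg)
  have P1: "\<forall>A>0. \<forall>\<epsilon>>0. \<exists>x0. \<forall>x\<ge>x0. \<forall>n\<ge>1.
            measure_pmf.prob (gw p n) {k. real k / m ^ n > x}
              \<ge> (1 - \<sigma>2 / ((m\<^sup>2 - m) * A\<^sup>2) - \<epsilon>) *
                 (\<Sum>i<n. m ^ i * Fbar p (m ^ (i+1) * x + A * sqrt (m ^ (i+1) * x)))"
  proof (intro allI impI)
    fix A \<epsilon> :: real assume A0: "A > 0" and e0: "\<epsilon> > 0"
    define x0 where "x0 = max 1 (max (2 * al / \<epsilon>) ((2 * V / (A * \<epsilon>))\<^sup>2))"
    show "\<exists>x0. \<forall>x\<ge>x0. \<forall>n\<ge>1.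
            measure_pmf.prob (gw p n) {k. real k / m ^ n > x}
              \<ge> (1 - \<sigma>2 / ((m\<^sup>2 - m) * A\<^sup>2) - \<epsilon>) *
                 (\<Sum>i<n. m ^ i * Fbar p (m ^ (i+1) * x + A * sqrt (m ^ (i+1) * x)))"
    proof (intro exI[of _ x0] allI impI)
      fix x :: real and n :: nat assume x: "x0 \<le> x" and n: "1 \<le> n"
      have x1: "x \<ge> 1" using x by (simp add: x0_def)
      have mb: "measure_pmf.prob (gw p n) {k. real k / m^n > x}
          \<ge> (1 - (V / A\<^sup>2 + V / (A * sqrt (m * x))) - al / x) * SS p m A n x"
        using main_bound[OF pm1 pm2 mean_gt K0 A0 _ x1, of n] V0 unfolding VV al_def by simp
      have t1: "al / x \<le> \<epsilon> / 2"
      proof -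
        have "2 * al / \<epsilon> \<le> x" using x by (simp add: x0_def)
        then have "2 * al \<le> \<epsilon> * x" using e0 by (simp add: divide_le_eq mult.commute)
        then show ?thesis using x1 by (simp add: divide_le_eq mult.commute)
      qed
      have t2: "V / (A * sqrt (m * x)) \<le> \<epsilon> / 2"
      proof -
        have "(2 * V / (A * \<epsilon>))\<^sup>2 \<le> x" using x by (simp add: x0_def)
        also have "x \<le> m * x" using mean_gt x1 by simp
        finally have "sqrt ((2 * V / (A * \<epsilon>))\<^sup>2) \<le> sqrt (m * x)" by (rule real_sqrt_le_mono)
        then have "2 * V / (A * \<epsilon>) \<le> sqrt (m * x)" using V0 A0 e0 by simp
        then have "2 * V \<le> sqrt (m * x) * (A * \<epsilon>)" using A0 e0 by (simp add: divide_le_eq)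
        moreover have "sqrt (m * x) > 0" using mean_gt x1 by simp
        ultimately show ?thesis using A0 by (simp add: divide_le_eq field_simps)
      qed
      have "(1 - \<sigma>2 / ((m\<^sup>2 - m) * A\<^sup>2) - \<epsilon>) * SS p m A n x
          \<le> (1 - (V / A\<^sup>2 + V / (A * sqrt (m * x))) - al / x) * SS p m A n x"
      proof (rule mult_right_mono)
        show "1 - \<sigma>2 / ((m\<^sup>2 - m) * A\<^sup>2) - \<epsilon> \<le> 1 - (V / A\<^sup>2 + V / (A * sqrt (m * x))) - al / x"
          unfolding cV using t1 t2 by linarith
        show "0 \<le> SS p m A n x" using SS_nonneg[of m p A n x] mean_gt by simp
      qed
      also have "\<dots> \<le> measure_pmf.prob (gw p n) {k. real k / m^n > x}" by (rule mb)
      finally show "measure_pmf.prob (gw p n) {k. real k / m ^ n > x}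
              \<ge> (1 - \<sigma>2 / ((m\<^sup>2 - m) * A\<^sup>2) - \<epsilon>) *
                 (\<Sum>i<n. m ^ i * Fbar p (m ^ (i+1) * x + A * sqrt (m ^ (i+1) * x)))"
        by (simp add: SS_def)
    qed
  qed
  have P2: "\<forall>\<epsilon>>0. \<exists>x0. \<forall>x\<ge>x0. \<forall>n\<ge>1.
              measure_pmf.prob (gw p n) {k. real k / m ^ n > x}
                \<ge> (1 - \<epsilon>) * (\<Sum>i<n. m ^ i * Fbar p (m ^ (i+1) * x))"
    if ins: "sqrt_insensitive p"
  proof (intro allI impI)
    fix \<epsilon> :: real assume e0: "\<epsilon> > 0"
    show "\<exists>x0. \<forall>x\<ge>x0. \<forall>n\<ge>1.
              measure_pmf.prob (gw p n) {k. real k / m ^ n > x}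
                \<ge> (1 - \<epsilon>) * (\<Sum>i<n. m ^ i * Fbar p (m ^ (i+1) * x))"
    proof (cases "\<epsilon> \<ge> 1")
      case True
      show ?thesis
      proof (intro exI[of _ 0] allI impI)
        fix x :: real and n :: nat
        have "(1 - \<epsilon>) * (\<Sum>i<n. m ^ i * Fbar p (m ^ (i+1) * x)) \<le> 0"
          using True SSnn[where n=n and t="\<lambda>i. m ^ (i+1) * x"] by (simp add: mult_nonpos_nonneg)
        then show "measure_pmf.prob (gw p n) {k. real k / m ^ n > x}
                \<ge> (1 - \<epsilon>) * (\<Sum>i<n. m ^ i * Fbar p (m ^ (i+1) * x))"
          by (meson measure_nonneg order.trans)
      qed
    next
      case False
      define A where "A = sqrt (4 * V / \<epsilon>) + 1"
      have A0: "A > 0" using V0 e0 by (simp add: A_def add_nonneg_pos)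
      have "sqrt (4 * V / \<epsilon>) \<le> A" by (simp add: A_def)
      then have "(sqrt (4 * V / \<epsilon>))\<^sup>2 \<le> A\<^sup>2" by (intro power_mono) (use V0 e0 in auto)
      then have "4 * V / \<epsilon> \<le> A\<^sup>2" using V0 e0 by simp
      then have VA: "V / A\<^sup>2 \<le> \<epsilon> / 4" using A0 e0 by (simp add: field_simps)
      have e4: "\<epsilon>/4 > 0" using e0 by simp
      from P1[rule_format, OF A0 e4] obtain x1 where x1: "\<forall>x\<ge>x1. \<forall>n\<ge>1.
            measure_pmf.prob (gw p n) {k. real k / m ^ n > x}
              \<ge> (1 - \<sigma>2 / ((m\<^sup>2 - m) * A\<^sup>2) - \<epsilon>/4) *
                 (\<Sum>i<n. m ^ i * Fbar p (m ^ (i+1) * x + A * sqrt (m ^ (i+1) * x)))"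
        by blast
      define \<delta> where "\<delta> = (1 - \<epsilon>) / (1 - \<epsilon>/2)"
      have h2: "1 - \<epsilon>/2 > 0" using False by simp
      have d1: "\<delta> < 1" using h2 e0 by (simp add: \<delta>_def divide_less_eq)
      obtain y0 where y0: "\<And>y. y \<ge> y0 \<Longrightarrow> Fbar p (y + A * sqrt y) \<ge> \<delta> * Fbar p y"
        using insens_bound[OF ins A0 d1] by blast
      show ?thesis
      proof (intro exI[of _ "max x1 (max y0 1)"] allI impI)
        fix x :: real and n :: nat assume x: "max x1 (max y0 1) \<le> x" and n: "1 \<le> n"
        have "(1 - \<epsilon>) * (\<Sum>i<n. m ^ i * Fbar p (m ^ (i+1) * x))
            = (1 - \<epsilon>/2) * (\<Sum>i<n. \<delta> * (m ^ i * Fbar p (m ^ (i+1) * x)))"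
        proof -
          have "(1 - \<epsilon>/2) * \<delta> = 1 - \<epsilon>" using h2 by (simp add: \<delta>_def)
          then have "(1 - \<epsilon>) * (\<Sum>i<n. m ^ i * Fbar p (m ^ (i+1) * x))
              = (1 - \<epsilon>/2) * (\<delta> * (\<Sum>i<n. m ^ i * Fbar p (m ^ (i+1) * x)))"
            by (simp only: mult.assoc[symmetric])
          then show ?thesis by (simp only: sum_distrib_left)
        qed
        also have "\<dots> \<le> (1 - \<epsilon>/2) * (\<Sum>i<n. m ^ i * Fbar p (m ^ (i+1) * x + A * sqrt (m ^ (i+1) * x)))"
        proof (intro mult_left_mono sum_mono)
          fix i assume "i \<in> {..<n}"
          have "m ^ (i+1) \<ge> 1" using mean_gt by (intro one_le_power) simp
          then have "m ^ (i+1) * x \<ge> 1 * x" using x by (intro mult_right_mono) auto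
          then have "m ^ (i+1) * x \<ge> y0" using x by linarith
          then have "\<delta> * Fbar p (m ^ (i+1) * x) \<le> Fbar p (m ^ (i+1) * x + A * sqrt (m ^ (i+1) * x))"
            by (rule y0)
          then show "\<delta> * (m ^ i * Fbar p (m ^ (i+1) * x)) \<le> m ^ i * Fbar p (m ^ (i+1) * x + A * sqrt (m ^ (i+1) * x))"
            using mean_gt by (simp add: mult.left_commute mult_left_mono)
        qed (use h2 in simp)
        also have "\<dots> \<le> (1 - \<sigma>2 / ((m\<^sup>2 - m) * A\<^sup>2) - \<epsilon>/4) *
                 (\<Sum>i<n. m ^ i * Fbar p (m ^ (i+1) * x + A * sqrt (m ^ (i+1) * x)))"
          using VA SSnn[where n=n and t="\<lambda>i. m ^ (i+1) * x + A * sqrt (m ^ (i+1) * x)"] unfolding cV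
          by (intro mult_right_mono) auto
        also have "\<dots> \<le> measure_pmf.prob (gw p n) {k. real k / m ^ n > x}"
          using x1 x n by simp
        finally show "measure_pmf.prob (gw p n) {k. real k / m ^ n > x}
                \<ge> (1 - \<epsilon>) * (\<Sum>i<n. m ^ i * Fbar p (m ^ (i+1) * x))" .
      qed
    qed
  qed
  show ?thesis using P1 P2 by blast
qed

end
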